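(* Let $\mathcal{G}_I$ be the class of all finite irreflexive graphs. (1) A class $\mathcal{C}\subseteq\mathcal{G}_I$ that is downward closed under the homomorphic image ordering is well quasi-ordered (under that ordering) if and only if it is finite. (2) For any finite set $\{O_1,\dots,O_k\}\subseteq\mathcal{G}_I$, the class $\mathrm{Av}(O_1,\dots,O_k)$, taken with respect to either the homomorphic image ordering or the strong homomorphic image ordering, is not well quasi-ordered (under the respective ordering).
   Context: An irreflexive graph is a set with a symmetric edge relation having no loops; homomorphisms map edges to edges (so an edge cannot be collapsed to a single vertex). A homomorphism $\phi$ is strong if additionally every edge of the target between vertices of the image is the image of an edge. Homomorphic image ordering: $A\preceq B$ iff there is a surjective homomorphism $B\to A$; strong homomorphic image ordering: iff there is a surjective strong homomorphism $B\to A$. For a set $B$ of structures, $\mathrm{Av}(B)=\{x\in\mathcal{G}_I : b\not\preceq x \text{ for all } b\in B\}$. Well quasi-ordered means no infinite strictly decreasing sequence and no infinite antichain; graphs are considered up to isomorphism (finite means finitely many isomorphism types). *)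

theory Defs
  imports Main
begin

text \<open>Every finite graph is isomorphic to one on nat vertices; classes of graphs
  are treated up to isomorphism via the orderings and the notion iso_finite.\<close>

type_synonym graph = "nat set \<times> (nat \<times> nat) set"

definition verts :: "graph \<Rightarrow> nat set" where "verts G = fst G"
definition edges :: "graph \<Rightarrow> (nat \<times> nat) set" where "edges G = snd G"

definition GI :: "graph set" where
  "GI = {G. finite (verts G) \<and> edges G \<subseteq> verts G \<times> verts G
            \<and> (\<forall>x y. (x, y) \<in> edges G \<longrightarrow> (y, x) \<in> edges G)
            \<and> (\<forall>x. (x, x) \<notin> edges G)}"

definition is_hom :: "(nat \<Rightarrow> nat) \<Rightarrow> graph \<Rightarrow> graph \<Rightarrow> bool" where
  "is_hom f G H \<longleftrightarrow> f ` verts G \<subseteq> verts H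
     \<and> (\<forall>x y. (x, y) \<in> edges G \<longrightarrow> (f x, f y) \<in> edges H)"

definition is_strong_hom :: "(nat \<Rightarrow> nat) \<Rightarrow> graph \<Rightarrow> graph \<Rightarrow> bool" where
  "is_strong_hom f G H \<longleftrightarrow> is_hom f G H
     \<and> (\<forall>u v. u \<in> f ` verts G \<and> v \<in> f ` verts G \<and> (u, v) \<in> edges H
           \<longrightarrow> (\<exists>x y. (x, y) \<in> edges G \<and> f x = u \<and> f y = v))"

definition hom_le :: "graph \<Rightarrow> graph \<Rightarrow> bool" where
  "hom_le A B \<longleftrightarrow> (\<exists>f. is_hom f B A \<and> f ` verts B = verts A)"

definition strong_hom_le :: "graph \<Rightarrow> graph \<Rightarrow> bool" where
  "strong_hom_le A B \<longleftrightarrow> (\<exists>f. is_strong_hom f B A \<and> f ` verts B = verts A)"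

definition graph_iso :: "graph \<Rightarrow> graph \<Rightarrow> bool" where
  "graph_iso G H \<longleftrightarrow> (\<exists>f. bij_betw f (verts G) (verts H)
      \<and> (\<forall>x\<in>verts G. \<forall>y\<in>verts G. (x, y) \<in> edges G \<longleftrightarrow> (f x, f y) \<in> edges H))"

definition iso_finite :: "graph set \<Rightarrow> bool" where
  "iso_finite C \<longleftrightarrow> (\<exists>F. finite F \<and> F \<subseteq> C \<and> (\<forall>G\<in>C. \<exists>H\<in>F. graph_iso G H))"

definition down_closed :: "(graph \<Rightarrow> graph \<Rightarrow> bool) \<Rightarrow> graph set \<Rightarrow> bool" where
  "down_closed le C \<longleftrightarrow> (\<forall>G\<in>C. \<forall>H\<in>GI. le H G \<longrightarrow> H \<in> C)"

definition wqo_class :: "(graph \<Rightarrow> graph \<Rightarrow> bool) \<Rightarrow> graph set \<Rightarrow> bool" where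
  "wqo_class le C \<longleftrightarrow>
     \<not> (\<exists>s::nat \<Rightarrow> graph. (\<forall>i. s i \<in> C) \<and>
          (\<forall>i. le (s (Suc i)) (s i) \<and> \<not> le (s i) (s (Suc i))))
   \<and> \<not> (\<exists>s::nat \<Rightarrow> graph. (\<forall>i. s i \<in> C) \<and>
          (\<forall>i j. i \<noteq> j \<longrightarrow> \<not> le (s i) (s j)))"

definition Av :: "(graph \<Rightarrow> graph \<Rightarrow> bool) \<Rightarrow> graph set \<Rightarrow> graph set" where
  "Av le B = {x \<in> GI. \<forall>b\<in>B. \<not> le b x}"

end

theory Submission
  imports Defs
begin

definition Kn :: "nat \<Rightarrow> graph" where
  "Kn n = ({0..<n}, {(i,j). i<n \<and> j<n \<and> i\<noteq>j})"

lemma Kn_GI: "Kn n \<in> GI"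
  by (auto simp: GI_def Kn_def verts_def edges_def)

lemma hom_le_Kn_card:
  assumes "hom_le A (Kn n)" "\<forall>x. (x,x) \<notin> edges A"
  shows "card (verts A) = n"
proof -
  obtain f where f: "is_hom f (Kn n) A" "f ` {0..<n} = verts A"
    using assms by (auto simp: hom_le_def Kn_def verts_def)
  have "inj_on f {0..<n}"
  proof (rule inj_onI)
    fix x y assume xy: "x \<in> {0..<n}" "y \<in> {0..<n}" "f x = f y"
    show "x = y"
    proof (rule ccontr)
      assume "x \<noteq> y"
      then have "(x,y) \<in> edges (Kn n)" using xy by (auto simp: Kn_def edges_def)
      then have "(f x, f y) \<in> edges A" using f(1) by (auto simp: is_hom_def)
      thus False using assms(2) xy(3) by auto
    qed
  qed
  then show ?thesis using f(2) card_image by fastforce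
qed

lemma Kn_antichain: "m \<noteq> n \<Longrightarrow> \<not> hom_le (Kn m) (Kn n)"
  using hom_le_Kn_card[of "Kn m" n] by (auto simp: Kn_def verts_def edges_def)

lemma strong_imp: "strong_hom_le A B \<Longrightarrow> hom_le A B"
  by (auto simp: strong_hom_le_def is_strong_hom_def hom_le_def)

lemma Kn_antichain_strong: "m \<noteq> n \<Longrightarrow> \<not> strong_hom_le (Kn m) (Kn n)"
  using strong_imp Kn_antichain by blast

lemma Kn_le_G:
  assumes "G \<in> GI"
  shows "hom_le (Kn (card (verts G))) G"
proof -
  have fin: "finite (verts G)" using assms by (simp add: GI_def)
  obtain h where h: "bij_betw h (verts G) {0..<card (verts G)}"
    using ex_bij_betw_finite_nat[OF fin] by blast
  have "is_hom h G (Kn (card (verts G)))"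
    unfolding is_hom_def
  proof (intro conjI allI impI)
    show "h ` verts G \<subseteq> verts (Kn (card (verts G)))"
      using h by (auto simp: bij_betw_def Kn_def verts_def)
    fix x y assume e: "(x,y) \<in> edges G"
    have xy: "x \<in> verts G" "y \<in> verts G" "x \<noteq> y" using assms e by (auto simp: GI_def)
    then have "h x \<noteq> h y" using h by (auto simp: bij_betw_def inj_on_def)
    moreover have "h x \<in> {0..<card (verts G)}" "h y \<in> {0..<card (verts G)}"
      using h xy by (auto simp: bij_betw_def)
    ultimately show "(h x, h y) \<in> edges (Kn (card (verts G)))"
      by (auto simp: Kn_def edges_def)
  qed
  thus ?thesis using h by (auto simp: hom_le_def bij_betw_def Kn_def verts_def)
qed

lemma hom_le_refl: "hom_le A A"
  unfolding hom_le_def is_hom_def by (rule exI[of _ id]) auto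

lemma hom_le_trans: "hom_le A B \<Longrightarrow> hom_le B C \<Longrightarrow> hom_le A C"
  unfolding hom_le_def is_hom_def
proof (elim exE conjE)
  fix f g
  assume a: "f ` verts B \<subseteq> verts A" "\<forall>x y. (x, y) \<in> edges B \<longrightarrow> (f x, f y) \<in> edges A"
     "f ` verts B = verts A" "g ` verts C \<subseteq> verts B"
     "\<forall>x y. (x, y) \<in> edges C \<longrightarrow> (g x, g y) \<in> edges B" "g ` verts C = verts B"
  show "\<exists>f. (f ` verts C \<subseteq> verts A \<and> (\<forall>x y. (x, y) \<in> edges C \<longrightarrow> (f x, f y) \<in> edges A))
        \<and> f ` verts C = verts A"
  proof (rule exI[of _ "f \<circ> g"], intro conjI allI impI)
    have "(f \<circ> g) ` verts C = verts A" using a(3,6) image_image[of f g "verts C"] by (simp add: comp_def)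
    then show "(f \<circ> g) ` verts C = verts A" "(f \<circ> g) ` verts C \<subseteq> verts A" by auto
    fix x y assume "(x, y) \<in> edges C"
    then show "((f \<circ> g) x, (f \<circ> g) y) \<in> edges A" using a(2,5) by simp
  qed
qed

lemma iso_le1:
  assumes "graph_iso G H" "edges G \<subseteq> verts G \<times> verts G"
  shows "hom_le H G"
proof -
  obtain f where f: "bij_betw f (verts G) (verts H)"
    "\<forall>x\<in>verts G. \<forall>y\<in>verts G. (x, y) \<in> edges G \<longleftrightarrow> (f x, f y) \<in> edges H"
    using assms(1) by (auto simp: graph_iso_def)
  show ?thesis unfolding hom_le_def is_hom_def
    by (rule exI[of _ f]) (use f assms(2) in \<open>auto simp: bij_betw_def\<close>)
qed

lemma iso_le2:
  assumes "graph_iso G H" "edges H \<subseteq> verts H \<times> verts H"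
  shows "hom_le G H"
proof -
  obtain f where f: "bij_betw f (verts G) (verts H)"
    "\<forall>x\<in>verts G. \<forall>y\<in>verts G. (x, y) \<in> edges G \<longleftrightarrow> (f x, f y) \<in> edges H"
    using assms(1) by (auto simp: graph_iso_def)
  define g where "g = inv_into (verts G) f"
  have gb: "bij_betw g (verts H) (verts G)" using f(1) by (simp add: g_def bij_betw_inv_into)
  have "is_hom g H G" unfolding is_hom_def
  proof (intro conjI allI impI)
    show "g ` verts H \<subseteq> verts G" using gb by (auto simp: bij_betw_def)
    fix u v assume e: "(u,v) \<in> edges H"
    then have uv: "u \<in> verts H" "v \<in> verts H" using assms(2) by auto
    then have "g u \<in> verts G" "g v \<in> verts G" "f (g u) = u" "f (g v) = v"
      using gb f(1) by (auto simp: g_def bij_betw_def f_inv_into_f)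
    then have "(g u, g v) \<in> edges G \<longleftrightarrow> (f (g u), f (g v)) \<in> edges H" using f(2) by blast
    then show "(g u, g v) \<in> edges G" using e \<open>f (g u) = u\<close> \<open>f (g v) = v\<close> by simp
  qed
  thus ?thesis using gb by (auto simp: hom_le_def bij_betw_def)
qed

lemma chain_le:
  assumes "\<forall>i. hom_le (s (Suc i)) (s i)" "i \<le> j"
  shows "hom_le (s j) (s i)"
  using assms(2)
proof (induction rule: dec_induct)
  case base then show ?case by (rule hom_le_refl)
next
  case (step n) then show ?case using assms(1) hom_le_trans by blast
qed

lemma antichain_not_wqo:
  fixes s :: "nat \<Rightarrow> graph"
  assumes "\<forall>i. s i \<in> C" "\<forall>i j. i \<noteq> j \<longrightarrow> \<not> le (s i) (s j)"
  shows "\<not> wqo_class le C"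
proof
  assume "wqo_class le C"
  then have "\<not> (\<exists>s::nat \<Rightarrow> graph. (\<forall>i. s i \<in> C) \<and> (\<forall>i j. i \<noteq> j \<longrightarrow> \<not> le (s i) (s j)))"
    unfolding wqo_class_def by (rule conjunct2)
  moreover have "\<exists>s::nat \<Rightarrow> graph. (\<forall>i. s i \<in> C) \<and> (\<forall>i j. i \<noteq> j \<longrightarrow> \<not> le (s i) (s j))"
    using assms by (intro exI[of _ s] conjI)
  ultimately show False by contradiction
qed

lemma isofin_key:
  fixes s :: "nat \<Rightarrow> graph"
  assumes "C \<subseteq> GI" "iso_finite C" "\<forall>i. s i \<in> C"
  shows "\<exists>i j. i < j \<and> hom_le (s i) (s j)"
proof -
  obtain F where F: "finite F" "F \<subseteq> C" "\<forall>G\<in>C. \<exists>H\<in>F. graph_iso G H"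
    using assms(2) by (auto simp: iso_finite_def)
  have "\<forall>i. \<exists>H. H \<in> F \<and> graph_iso (s i) H" using F(3) assms(3) by blast
  then have "\<exists>r. \<forall>i. r i \<in> F \<and> graph_iso (s i) (r i)" by (rule choice)
  then obtain r where r: "\<forall>i. r i \<in> F \<and> graph_iso (s i) (r i)" by blast
  have "range r \<subseteq> F" using r by blast
  then have "finite (range r)" using F(1) by (rule finite_subset)
  have "\<not> inj r"
  proof
    assume "inj r"
    then have "finite (UNIV::nat set)" by (rule finite_imageD[OF \<open>finite (range r)\<close>])
    then show False by simp
  qed
  then obtain i j where ij: "i \<noteq> j" "r i = r j" by (auto simp: inj_def)
  have le: "hom_le (s a) (s b)" if "r a = r b" for a b
  proof -
    have "r a \<in> GI" using r F(2) assms(1) by blast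
    then have "edges (r a) \<subseteq> verts (r a) \<times> verts (r a)" by (simp add: GI_def)
    then have 1: "hom_le (s a) (r a)" using iso_le2 r by blast
    have "s b \<in> GI" using assms(1,3) by blast
    then have "edges (s b) \<subseteq> verts (s b) \<times> verts (s b)" by (simp add: GI_def)
    then have "hom_le (r b) (s b)" using iso_le1 r by blast
    with 1 show ?thesis using that hom_le_trans[of "s a" "r a" "s b"] by simp
  qed
  show ?thesis
  proof (cases "i < j")
    case True then show ?thesis using le ij by blast
  next
    case False then have "j < i" using ij by auto
    moreover have "hom_le (s j) (s i)" using le ij(2) by simp
    ultimately show ?thesis by blast
  qed
qed

lemma isofin_wqo:
  assumes "C \<subseteq> GI" "iso_finite C"
  shows "wqo_class hom_le C"
proof -
  have A: "False" if sC: "\<forall>i. s i \<in> C" and s2: "\<forall>i. hom_le (s (Suc i)) (s i)"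
     and s3: "\<forall>i. \<not> hom_le (s i) (s (Suc i))" for s :: "nat \<Rightarrow> graph"
  proof -
    from isofin_key[OF assms sC] obtain i j where ij: "i < j" "hom_le (s i) (s j)" by blast
    have "hom_le (s j) (s (Suc i))" using chain_le[OF s2, of "Suc i" j] ij(1) by simp
    then have "hom_le (s i) (s (Suc i))" by (rule hom_le_trans[OF ij(2)])
    then show False using s3 by simp
  qed
  have B: "False" if sC: "\<forall>i. s i \<in> C" and s2: "\<forall>i j. i \<noteq> j \<longrightarrow> \<not> hom_le (s i) (s j)"
     for s :: "nat \<Rightarrow> graph"
  proof -
    from isofin_key[OF assms sC] obtain i j where ij: "i < j" "hom_le (s i) (s j)" by blast
    then show False using s2 by simp
  qed
  show ?thesis unfolding wqo_class_def
  proof (intro conjI notI)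
    assume "\<exists>s::nat \<Rightarrow> graph. (\<forall>i. s i \<in> C) \<and> (\<forall>i. hom_le (s (Suc i)) (s i) \<and> \<not> hom_le (s i) (s (Suc i)))"
    then obtain s :: "nat \<Rightarrow> graph" where "\<forall>i. s i \<in> C"
      "\<forall>i. hom_le (s (Suc i)) (s i) \<and> \<not> hom_le (s i) (s (Suc i))" by (elim exE conjE)
    then show False using A[of s] by simp
  next
    assume "\<exists>s::nat \<Rightarrow> graph. (\<forall>i. s i \<in> C) \<and> (\<forall>i j. i \<noteq> j \<longrightarrow> \<not> hom_le (s i) (s j))"
    then obtain s :: "nat \<Rightarrow> graph" where "\<forall>i. s i \<in> C"
      "\<forall>i j. i \<noteq> j \<longrightarrow> \<not> hom_le (s i) (s j)" by (elim exE conjE)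
    then show False using B[of s] by simp
  qed
qed

lemma canon:
  assumes "G \<in> GI"
  shows "\<exists>H\<in>GI. hom_le H G \<and> graph_iso G H \<and> verts H = {0..<card (verts G)}"
proof -
  have fin: "finite (verts G)" and sub: "edges G \<subseteq> verts G \<times> verts G"
    and sym: "\<forall>x y. (x, y) \<in> edges G \<longrightarrow> (y, x) \<in> edges G"
    and irr: "\<forall>x. (x, x) \<notin> edges G" using assms by (auto simp: GI_def)
  obtain h where h: "bij_betw h (verts G) {0..<card (verts G)}"
    using ex_bij_betw_finite_nat[OF fin] by blast
  have inj: "inj_on h (verts G)" using h by (simp add: bij_betw_def)
  define H :: graph where "H = ({0..<card (verts G)}, map_prod h h ` edges G)"
  have vH: "verts H = {0..<card (verts G)}" and eH: "edges H = map_prod h h ` edges G"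
    by (auto simp: H_def verts_def edges_def)
  have ee: "(h x, h y) \<in> edges H \<longleftrightarrow> (x, y) \<in> edges G" if "x \<in> verts G" "y \<in> verts G" for x y
  proof
    assume "(h x, h y) \<in> edges H"
    then obtain a b where ab: "(a,b) \<in> edges G" "h a = h x" "h b = h y" by (auto simp: eH)
    then have "a \<in> verts G" "b \<in> verts G" using sub by auto
    then have "a = x" "b = y" using ab inj that by (auto simp: inj_on_def)
    then show "(x,y) \<in> edges G" using ab by simp
  qed (auto simp: eH)
  have "H \<in> GI" unfolding GI_def
  proof (intro CollectI conjI allI impI)
    show "finite (verts H)" by (simp add: vH)
    show "edges H \<subseteq> verts H \<times> verts H" using sub h by (auto simp: eH vH bij_betw_def)
    fix x y assume "(x,y) \<in> edges H"
    then obtain a b where "(a,b) \<in> edges G" "x = h a" "y = h b" by (auto simp: eH)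
    then show "(y,x) \<in> edges H" using sym by (auto simp: eH)
  next
    fix x show "(x,x) \<notin> edges H"
    proof
      assume "(x,x) \<in> edges H"
      then obtain a b where ab: "(a,b) \<in> edges G" "x = h a" "x = h b" by (auto simp: eH)
      then have "a = b" using sub inj by (auto simp: inj_on_def)
      then show False using ab irr by auto
    qed
  qed
  moreover have "graph_iso G H" unfolding graph_iso_def
    using h ee vH by auto
  moreover have "hom_le H G" unfolding hom_le_def is_hom_def
    by (rule exI[of _ h]) (use h in \<open>auto simp: vH eH bij_betw_def\<close>)
  ultimately show ?thesis using vH by blast
qed

lemma bounded_isofin:
  assumes "C \<subseteq> GI" "down_closed hom_le C" "\<forall>G\<in>C. card (verts G) \<le> N"
  shows "iso_finite C"
proof -
  define S :: "graph set" where "S = Pow {0..<N} \<times> Pow ({0..<N} \<times> {0..<N})"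
  have "finite S" by (simp add: S_def)
  moreover have "\<forall>G\<in>C. \<exists>H\<in>C \<inter> S. graph_iso G H"
  proof
    fix G assume G: "G \<in> C"
    then obtain H where H: "H \<in> GI" "hom_le H G" "graph_iso G H" "verts H = {0..<card (verts G)}"
      using canon assms(1) by blast
    have "H \<in> C" using assms(2) G H by (auto simp: down_closed_def)
    moreover have "H \<in> S"
    proof -
      have "verts H \<subseteq> {0..<N}" using H(4) assms(3) G by auto
      moreover have "edges H \<subseteq> verts H \<times> verts H" using H(1) by (auto simp: GI_def)
      ultimately show ?thesis unfolding S_def
        by (cases H) (auto simp: verts_def edges_def)
    qed
    ultimately show "\<exists>H\<in>C \<inter> S. graph_iso G H" using H(3) by blast
  qed
  ultimately show ?thesis unfolding iso_finite_def
    by (intro exI[of _ "C \<inter> S"]) auto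
qed

lemma unbounded_not_wqo:
  assumes "C \<subseteq> GI" "down_closed hom_le C" "\<forall>N. \<exists>G\<in>C. N < card (verts G)"
  shows "\<not> wqo_class hom_le C"
proof -
  have "\<forall>N. \<exists>G. G \<in> C \<and> N < card (verts G)" using assms(3) by blast
  then have "\<exists>g. \<forall>N. g N \<in> C \<and> N < card (verts (g N))" by (rule choice)
  then obtain g where g: "\<forall>N. g N \<in> C \<and> N < card (verts (g N))" by blast
  define c :: "nat \<Rightarrow> nat" where "c = rec_nat (card (verts (g 0))) (\<lambda>_ p. card (verts (g p)))"
  have c0: "c 0 = card (verts (g 0))" and cS: "\<And>i. c (Suc i) = card (verts (g (c i)))"
    by (simp_all add: c_def)
  have "strict_mono c" unfolding strict_mono_Suc_iff using cS g by simp
  then have inj: "inj c" by (rule strict_mono_imp_inj_on)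
  have inC: "Kn (c i) \<in> C" for i
  proof -
    have "\<exists>G\<in>C. card (verts G) = c i"
      by (cases i) (use g c0 cS in auto)
    then obtain G where "G \<in> C" "card (verts G) = c i" by blast
    then show ?thesis using Kn_le_G[of G] assms(1,2) Kn_GI
      by (auto simp: down_closed_def)
  qed
  have anti: "\<forall>i j. i \<noteq> j \<longrightarrow> \<not> hom_le (Kn (c i)) (Kn (c j))"
  proof (intro allI impI)
    fix i j :: nat assume "i \<noteq> j"
    then have "c i \<noteq> c j" using inj by (auto simp: inj_def)
    then show "\<not> hom_le (Kn (c i)) (Kn (c j))" by (rule Kn_antichain)
  qed
  show ?thesis
    by (rule antichain_not_wqo[of "\<lambda>i. Kn (c i)"]) (use inC anti in auto)
qed

theorem theorem3p1:
  shows "(\<forall>C. C \<subseteq> GI \<and> down_closed hom_le C \<longrightarrow> (wqo_class hom_le C \<longleftrightarrow> iso_finite C))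
       \<and> (\<forall>B. finite B \<and> B \<subseteq> GI \<longrightarrow>
            \<not> wqo_class hom_le (Av hom_le B) \<and> \<not> wqo_class strong_hom_le (Av strong_hom_le B))"
proof (intro conjI allI impI)
  fix C assume C: "C \<subseteq> GI \<and> down_closed hom_le C"
  show "wqo_class hom_le C \<longleftrightarrow> iso_finite C"
  proof
    assume w: "wqo_class hom_le C"
    show "iso_finite C"
    proof (cases "\<exists>N. \<forall>G\<in>C. card (verts G) \<le> N")
      case True then show ?thesis using bounded_isofin C by blast
    next
      case False
      then have "\<forall>N. \<exists>G\<in>C. N < card (verts G)" by (meson not_le)
      then show ?thesis using unbounded_not_wqo C w by blast
    qed
  next
    assume "iso_finite C" then show "wqo_class hom_le C" using isofin_wqo C by blast
  qed
next
  fix B assume B: "finite B \<and> B \<subseteq> GI"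
  define N where "N = Max (insert 0 ((\<lambda>b. card (verts b)) ` B))"
  have bN: "card (verts b) \<le> N" if "b \<in> B" for b
    using B that by (auto simp: N_def)
  have notle: "\<not> hom_le b (Kn (N + 1 + i))" if "b \<in> B" for b i
  proof
    assume "hom_le b (Kn (N + 1 + i))"
    moreover have "\<forall>x. (x,x) \<notin> edges b" using B that by (auto simp: GI_def)
    ultimately have "card (verts b) = N + 1 + i" using hom_le_Kn_card by blast
    then show False using bN[OF that] by simp
  qed
  have notle_s: "\<not> strong_hom_le b (Kn (N + 1 + i))" if "b \<in> B" for b i
    using notle[OF that] strong_imp by blast
  show "\<not> wqo_class hom_le (Av hom_le B)"
    by (rule antichain_not_wqo[of "\<lambda>i. Kn (N + 1 + i)"])
       (use notle Kn_GI Kn_antichain in \<open>auto simp: Av_def\<close>)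
  show "\<not> wqo_class strong_hom_le (Av strong_hom_le B)"
    by (rule antichain_not_wqo[of "\<lambda>i. Kn (N + 1 + i)"])
       (use notle_s Kn_GI Kn_antichain_strong in \<open>auto simp: Av_def\<close>)
qed

end
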